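(* Let $X$ be a first countable, connected, locally path connected space, $n\in\mathbb{N}$, and let $A_1,\dots,A_n$ be pairwise disjoint, path connected, closed subsets of $X$ such that $X/(A_1,\dots,A_n)$ is semi-locally simply connected. Let $p:X\to X/(A_1,\dots,A_n)$ be the quotient map. Then for every $a\in\bigcup_{i=1}^nA_i$, with $*=p(a)$, the induced homomorphism $p_*:\pi_1(X,a)\to\pi_1(X/(A_1,\dots,A_n),* )$ is surjective.
   Context: $X/(A_1,\dots,A_n)$ denotes the quotient space obtained by collapsing each $A_i$ to a point, with quotient map $p$. A space $Y$ is semi-locally simply connected if every $y\in Y$ has an open neighborhood $U$ such that every loop in $U$ based at $y$ is nullhomotopic in $Y$. *)

theory Defs
  imports "HOL-Analysis.Analysis"
begin

definition collapse_rel :: "'a topology \<Rightarrow> nat \<Rightarrow> (nat \<Rightarrow> 'a set) \<Rightarrow> ('a \<times> 'a) set" where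
  "collapse_rel X n A = {(x, y). x \<in> topspace X \<and> y \<in> topspace X \<and>
      (x = y \<or> (\<exists>i\<in>{1..n}. x \<in> A i \<and> y \<in> A i))}"

definition collapse_map :: "'a topology \<Rightarrow> nat \<Rightarrow> (nat \<Rightarrow> 'a set) \<Rightarrow> 'a \<Rightarrow> 'a set" where
  "collapse_map X n A x = collapse_rel X n A `` {x}"

definition collapse_space :: "'a topology \<Rightarrow> nat \<Rightarrow> (nat \<Rightarrow> 'a set) \<Rightarrow> 'a set topology" where
  "collapse_space X n A = topology (\<lambda>U. U \<subseteq> collapse_map X n A ` topspace X \<and>
      openin X {x \<in> topspace X. collapse_map X n A x \<in> U})"

definition homotopic_paths_in :: "'a topology \<Rightarrow> (real \<Rightarrow> 'a) \<Rightarrow> (real \<Rightarrow> 'a) \<Rightarrow> bool" where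
  "homotopic_paths_in X p q \<longleftrightarrow>
     homotopic_with (\<lambda>r. r 0 = p 0 \<and> r 1 = p 1) (subtopology euclideanreal {0..1}) X p q"

definition semi_locally_simply_connected :: "'a topology \<Rightarrow> bool" where
  "semi_locally_simply_connected Y \<longleftrightarrow>
     (\<forall>y \<in> topspace Y. \<exists>U. openin Y U \<and> y \<in> U \<and>
        (\<forall>g. pathin (subtopology Y U) g \<and> g 0 = y \<and> g 1 = y \<longrightarrow>
             homotopic_paths_in Y g (\<lambda>_. y)))"

lemma istopology_collapse_space:
  "istopology (\<lambda>U. U \<subseteq> collapse_map X n A ` topspace X \<and>
      openin X {x \<in> topspace X. collapse_map X n A x \<in> U})"
proof -
  let ?f = "collapse_map X n A"
  have i: "{x \<in> topspace X. ?f x \<in> S \<and> ?f x \<in> T} = {x \<in> topspace X. ?f x \<in> S} \<inter> {x \<in> topspace X. ?f x \<in> T}"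
    for S T by auto
  have u: "{x \<in> topspace X. \<exists>K\<in>\<K>. ?f x \<in> K} = \<Union>((\<lambda>S. {x \<in> topspace X. ?f x \<in> S}) ` \<K>)"
    for \<K> by auto
  show ?thesis unfolding istopology_def
    apply (intro conjI allI impI)
    apply (auto simp only: i)[1]
    apply (simp add: i openin_Int)
    apply (auto simp only: u)[1]
    apply (auto simp: u intro!: openin_Union)
    done
qed

lemma openin_collapse_space:
  "openin (collapse_space X n A) U \<longleftrightarrow> U \<subseteq> collapse_map X n A ` topspace X \<and>
      openin X {x \<in> topspace X. collapse_map X n A x \<in> U}"
  unfolding collapse_space_def
  by (simp add: topology_inverse' [OF istopology_collapse_space])

end

theory Submission
  imports Defs
begin

definition jp :: "(real \<Rightarrow> 'a) \<Rightarrow> (real \<Rightarrow> 'a) \<Rightarrow> real \<Rightarrow> 'a" where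
  "jp a b = (\<lambda>t. if t \<le> 1/2 then a (2*t) else b (2*t - 1))"

definition rv :: "(real \<Rightarrow> 'a) \<Rightarrow> real \<Rightarrow> 'a" where
  "rv a = (\<lambda>t. a (1 - t))"

lemma cm_sub: "continuous_on S f \<Longrightarrow> f ` S \<subseteq> T \<Longrightarrow> continuous_map (top_of_set S) (top_of_set T) f"
  by (auto simp: continuous_map_in_subtopology)

lemma hp_props:
  assumes "homotopic_paths_in Y f g"
  shows "pathin Y f \<and> pathin Y g \<and> g 0 = f 0 \<and> g 1 = f 1"
  using homotopic_with_imp_continuous_maps[OF assms[unfolded homotopic_paths_in_def]]
    homotopic_with_imp_property[OF assms[unfolded homotopic_paths_in_def]]
  by (simp add: pathin_def)

lemma hp_sym: "homotopic_paths_in Y f g \<Longrightarrow> homotopic_paths_in Y g f"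
proof -
  assume a: "homotopic_paths_in Y f g"
  then have e: "g 0 = f 0" "g 1 = f 1" using hp_props by blast+
  show ?thesis using homotopic_with_sym[THEN iffD1, OF a[unfolded homotopic_paths_in_def]]
    unfolding homotopic_paths_in_def e by simp
qed

lemma hp_trans: "homotopic_paths_in Y f g \<Longrightarrow> homotopic_paths_in Y g h \<Longrightarrow> homotopic_paths_in Y f h"
proof -
  assume a: "homotopic_paths_in Y f g" and b: "homotopic_paths_in Y g h"
  then have e: "g 0 = f 0" "g 1 = f 1" using hp_props by blast+
  show ?thesis using homotopic_with_trans[OF a[unfolded homotopic_paths_in_def] b[unfolded homotopic_paths_in_def e]]
    unfolding homotopic_paths_in_def by simp
qed

lemma hp_refl: "pathin Y f \<Longrightarrow> homotopic_paths_in Y f f"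
  by (simp add: homotopic_paths_in_def pathin_def)

lemma hp_reparam:
  assumes g: "pathin Y g" and c0: "continuous_on {0..1} K0" and c1: "continuous_on {0..1} K1"
   and r0: "K0 ` {0..1} \<subseteq> {0..1}" and r1: "K1 ` {0..1} \<subseteq> {0..1}"
   and e0: "K0 0 = K1 0" and e1: "K0 1 = K1 1"
   and f1: "\<And>t. t \<in> {0..1} \<Longrightarrow> f1 t = g (K0 t)" and f2: "\<And>t. t\<in>{0..1} \<Longrightarrow> f2 t = g (K1 t)"
  shows "homotopic_paths_in Y f1 f2"
proof -
  define K where "K = (\<lambda>x. (1 - fst x) * K0 (snd x) + fst x * K1 (snd x))"
  have a0: "continuous_on ({0..1}\<times>{0..1}) (\<lambda>x::real\<times>real. K0 (snd x))"
    by (rule continuous_on_compose2[OF c0 continuous_on_snd]) auto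
  have a1: "continuous_on ({0..1}\<times>{0..1}) (\<lambda>x::real\<times>real. K1 (snd x))"
    by (rule continuous_on_compose2[OF c1 continuous_on_snd]) auto
  have Kc: "continuous_on ({0..1}\<times>{0..1}) K"
    unfolding K_def by (intro continuous_intros a0 a1)
  have Kr: "K ` ({0..1}\<times>{0..1}) \<subseteq> {0..1}"
  proof clarify
    fix s t :: real assume s: "s \<in> {0..1}" and t: "t \<in> {0..1}"
    have h: "0 \<le> K0 t" "K0 t \<le> 1" "0 \<le> K1 t" "K1 t \<le> 1" using r0 r1 t unfolding image_subset_iff by auto
    have "(1-s) * K0 t \<le> 1 - s" "s * K1 t \<le> s" "0 \<le> (1-s) * K0 t" "0 \<le> s * K1 t"
      using h s by (auto intro: mult_left_le)
    then show "K (s,t) \<in> {0..1}" unfolding K_def by auto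
  qed
  have hc: "continuous_map (top_of_set ({0..1}\<times>{0..1})) Y (g \<circ> K)"
    using continuous_map_compose[OF cm_sub[OF Kc Kr] g[unfolded pathin_def]] .
  show ?thesis unfolding homotopic_paths_in_def
  proof (subst homotopic_with, force, intro exI conjI)
    show "continuous_map (prod_topology (top_of_set {0..1}) (top_of_set {0..1})) Y (g \<circ> K)"
      using hc by simp
    show "\<forall>x\<in>topspace (top_of_set {0..1}). (g \<circ> K) (0, x) = f1 x" by (simp add: K_def f1)
    show "\<forall>x\<in>topspace (top_of_set {0..1}). (g \<circ> K) (1, x) = f2 x" by (simp add: K_def f2)
    show "\<forall>t\<in>{0..1}. (\<lambda>x. (g \<circ> K) (t, x)) 0 = f1 0 \<and> (\<lambda>x. (g \<circ> K) (t, x)) 1 = f1 1"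
      by (simp add: K_def f1 e0 e1 algebra_simps)
  qed
qed

lemma hp_join:
  assumes a: "homotopic_paths_in Y a a'" and b: "homotopic_paths_in Y b b'" and e: "a 1 = b 0"
  shows "homotopic_paths_in Y (jp a b) (jp a' b')"
proof -
  let ?I = "{0..1::real}"
  obtain ka where ka: "continuous_map (prod_topology (top_of_set ?I) (top_of_set ?I)) Y ka"
    "\<forall>x. ka(0,x) = a x" "\<forall>x. ka(1,x) = a' x" "\<forall>t\<in>?I. ka(t,0) = a 0 \<and> ka(t,1) = a 1"
    using a unfolding homotopic_paths_in_def homotopic_with_def by auto
  obtain kb where kb: "continuous_map (prod_topology (top_of_set ?I) (top_of_set ?I)) Y kb"
    "\<forall>x. kb(0,x) = b x" "\<forall>x. kb(1,x) = b' x" "\<forall>t\<in>?I. kb(t,0) = b 0 \<and> kb(t,1) = b 1"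
    using b unfolding homotopic_paths_in_def homotopic_with_def by auto
  have ka': "continuous_map (top_of_set (?I \<times> ?I)) Y ka" using ka(1) by simp
  have kb': "continuous_map (top_of_set (?I \<times> ?I)) Y kb" using kb(1) by simp
  define k where "k = (\<lambda>y::real\<times>real. if snd y \<le> 1/2 then ka (fst y, 2 * snd y) else kb (fst y, 2 * snd y - 1))"
  have kc: "continuous_map (top_of_set (?I \<times> ?I)) Y k"
    unfolding k_def
  proof (rule continuous_map_cases_le)
    show "continuous_map (top_of_set (?I \<times> ?I)) euclideanreal snd"
      by (simp add: continuous_on_snd)
    show "continuous_map (top_of_set (?I \<times> ?I)) euclideanreal (\<lambda>x. 1/2)" by simp
    have eq1: "subtopology (top_of_set (?I \<times> ?I)) {x. x \<in> topspace (top_of_set (?I \<times> ?I)) \<and> snd x \<le> 1/2} = top_of_set {x. x \<in> ?I \<times> ?I \<and> snd x \<le> 1/2}"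
      by (simp only: subtopology_subtopology topspace_subtopology topspace_euclidean Int_UNIV_left) (rule arg_cong[where f="subtopology euclidean"]; auto)
    have eq2: "subtopology (top_of_set (?I \<times> ?I)) {x. x \<in> topspace (top_of_set (?I \<times> ?I)) \<and> 1/2 \<le> snd x} = top_of_set {x. x \<in> ?I \<times> ?I \<and> 1/2 \<le> snd x}"
      by (simp only: subtopology_subtopology topspace_subtopology topspace_euclidean Int_UNIV_left) (rule arg_cong[where f="subtopology euclidean"]; auto)
    have c1: "continuous_map (top_of_set {x. x \<in> ?I \<times> ?I \<and> snd x \<le> 1/2}) (top_of_set (?I \<times> ?I)) (\<lambda>y. (fst y, 2 * snd y))"
    proof (rule cm_sub)
      show "continuous_on {x. x \<in> ?I \<times> ?I \<and> snd x \<le> 1/2} (\<lambda>y. (fst y, 2 * snd y))"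
        by (intro continuous_intros)
      show "(\<lambda>y. (fst y, 2 * snd y)) ` {x. x \<in> ?I \<times> ?I \<and> snd x \<le> 1/2} \<subseteq> ?I \<times> ?I"
        by (clarsimp simp: image_subset_iff mem_Times_iff)
    qed
    show "continuous_map (subtopology (top_of_set (?I \<times> ?I)) {x. x \<in> topspace (top_of_set (?I \<times> ?I)) \<and> snd x \<le> 1/2}) Y (\<lambda>y. ka (fst y, 2 * snd y))"
      unfolding eq1 using continuous_map_compose[OF c1 ka'] unfolding o_def .
    have c2: "continuous_map (top_of_set {x. x \<in> ?I \<times> ?I \<and> 1/2 \<le> snd x}) (top_of_set (?I \<times> ?I)) (\<lambda>y. (fst y, 2 * snd y - 1))"
    proof (rule cm_sub)
      show "continuous_on {x. x \<in> ?I \<times> ?I \<and> 1/2 \<le> snd x} (\<lambda>y. (fst y, 2 * snd y - 1))"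
        by (intro continuous_intros)
      show "(\<lambda>y. (fst y, 2 * snd y - 1)) ` {x. x \<in> ?I \<times> ?I \<and> 1/2 \<le> snd x} \<subseteq> ?I \<times> ?I"
        by (clarsimp simp: image_subset_iff mem_Times_iff)
    qed
    show "continuous_map (subtopology (top_of_set (?I \<times> ?I)) {x. x \<in> topspace (top_of_set (?I \<times> ?I)) \<and> 1/2 \<le> snd x}) Y (\<lambda>y. kb (fst y, 2 * snd y - 1))"
      unfolding eq2 using continuous_map_compose[OF c2 kb'] unfolding o_def .
    show "ka (fst x, 2 * snd x) = kb (fst x, 2 * snd x - 1)" if xin: "x \<in> topspace (top_of_set (?I \<times> ?I))" and xs: "snd x = 1/2" for x
    proof -
      have f: "fst x \<in> ?I" using xin by (auto simp: mem_Times_iff)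
      have t: "2 * snd x = 1" "2 * snd x - 1 = 0" using xs by simp_all
      show ?thesis unfolding t using ka(4) kb(4) e f by simp
    qed
  qed
  show ?thesis unfolding homotopic_paths_in_def homotopic_with_def
  proof (intro exI conjI)
    show "continuous_map (prod_topology (top_of_set ?I) (top_of_set ?I)) Y k" using kc by simp
    show "\<forall>x. k (0, x) = jp a b x" by (simp add: k_def jp_def ka kb)
    show "\<forall>x. k (1, x) = jp a' b' x" by (simp add: k_def jp_def ka kb)
    show "\<forall>t\<in>?I. k (t, 0) = jp a b 0 \<and> k (t, 1) = jp a b 1"
      using ka(4) kb(4) by (simp add: k_def jp_def)
  qed
qed

lemma pathin_jp: "pathin Y a \<Longrightarrow> pathin Y b \<Longrightarrow> a 1 = b 0 \<Longrightarrow> pathin Y (jp a b)"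
proof -
  assume a: "pathin Y a" and b: "pathin Y b" and e: "a 1 = b 0"
  show ?thesis using hp_props[OF hp_join[OF hp_refl[OF a] hp_refl[OF b] e]] by blast
qed

lemma pathin_rv: "pathin Y a \<Longrightarrow> pathin Y (rv a)"
proof -
  assume a: "pathin Y a"
  have c: "continuous_map (top_of_set {0..1}) (top_of_set {0..1}) (\<lambda>t::real. 1 - t)"
  proof (rule cm_sub)
    show "continuous_on {0..1::real} (\<lambda>t. 1 - t)" by (intro continuous_intros)
    show "(\<lambda>t::real. 1 - t) ` {0..1} \<subseteq> {0..1}" by (auto simp: image_subset_iff)
  qed
  show ?thesis using continuous_map_compose[OF c a[unfolded pathin_def]] unfolding pathin_def rv_def o_def .
qed


lemma slsc_start:
  assumes loops: "\<And>l. pathin (subtopology Y U) l \<Longrightarrow> l 0 = y \<Longrightarrow> l 1 = y \<Longrightarrow> homotopic_paths_in Y l (\<lambda>_. y)"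
   and al: "pathin (subtopology Y U) \<alpha>" and be: "pathin (subtopology Y U) \<beta>"
   and e: "\<alpha> 0 = y" "\<beta> 0 = y" "\<alpha> 1 = \<beta> 1"
  shows "homotopic_paths_in Y \<alpha> \<beta>"
proof -
  define P where "P = jp \<alpha> (rv \<beta>)"
  have PU: "pathin (subtopology Y U) P" unfolding P_def
    by (rule pathin_jp[OF al pathin_rv[OF be]]) (simp add: rv_def e)
  have PY: "pathin Y P" using PU pathin_subtopology by blast
  have bY: "pathin Y \<beta>" using be pathin_subtopology by blast
  have L: "homotopic_paths_in Y P (\<lambda>_. y)"
    by (rule loops[OF PU]) (simp_all add: P_def jp_def rv_def e)
  have S1: "homotopic_paths_in Y \<alpha> (jp P \<beta>)"
  proof (rule hp_reparam[OF PY, of "\<lambda>t. t/2" "\<lambda>t. min (2*t) (3/2 - t)"])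
    show "\<alpha> t = P (t/2)" if "t \<in> {0..1}" for t using that by (simp add: P_def jp_def)
    show "jp P \<beta> t = P (min (2*t) (3/2 - t))" if t: "t \<in> {0..1}" for t
    proof -
      consider "t \<le> 1/2" | "1/2 < t" "t < 1" | "t = 1" using t by fastforce
      then show ?thesis
      proof cases
        case 1
        then have m: "min (2*t) (3/2 - t) = 2*t" by simp
        show ?thesis using 1 unfolding m jp_def by simp
      next
        case 2
        then have m: "min (2*t) (3/2 - t) = 3/2 - t" by simp
        have a: "\<not> 3/2 - t \<le> 1/2" "1 - (2 * (3/2 - t) - 1) = 2*t - 1" using 2 by auto
        show ?thesis using 2 unfolding m jp_def P_def rv_def a by simp
      next
        case 3
        show ?thesis unfolding 3 by (simp add: jp_def P_def rv_def e)
      qed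
    qed
  qed ((intro continuous_intros)?; auto simp: image_subset_iff min_def)+
  have S2: "homotopic_paths_in Y (jp P \<beta>) (jp (\<lambda>_. y) \<beta>)"
    by (rule hp_join[OF L hp_refl[OF bY]]) (simp add: P_def jp_def rv_def)
  have S3: "homotopic_paths_in Y (jp (\<lambda>_. y) \<beta>) \<beta>"
  proof (rule hp_reparam[OF bY, of "\<lambda>t. max 0 (2*t - 1)" "\<lambda>t. t"])
    show "jp (\<lambda>_. y) \<beta> t = \<beta> (max 0 (2*t - 1))" if "t \<in> {0..1}" for t
    proof (cases "t \<le> 1/2")
      case True
      then have m: "max 0 (2*t - 1) = 0" by simp
      show ?thesis using True unfolding m jp_def by (simp add: e)
    next
      case False
      then have m: "max 0 (2*t - 1) = 2*t - 1" by simp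
      show ?thesis using False unfolding m jp_def by simp
    qed
  qed ((intro continuous_intros)?; auto simp: image_subset_iff max_def)+
  show ?thesis using hp_trans[OF S1 hp_trans[OF S2 S3]] .
qed

lemma slsc_end:
  assumes loops: "\<And>l. pathin (subtopology Y U) l \<Longrightarrow> l 0 = y \<Longrightarrow> l 1 = y \<Longrightarrow> homotopic_paths_in Y l (\<lambda>_. y)"
   and al: "pathin (subtopology Y U) \<alpha>" and be: "pathin (subtopology Y U) \<beta>"
   and e: "\<alpha> 1 = y" "\<beta> 1 = y" "\<alpha> 0 = \<beta> 0"
  shows "homotopic_paths_in Y \<alpha> \<beta>"
proof -
  define P where "P = jp (rv \<beta>) \<alpha>"
  have PU: "pathin (subtopology Y U) P" unfolding P_def
    by (rule pathin_jp[OF pathin_rv[OF be] al]) (simp add: rv_def e)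
  have PY: "pathin Y P" using PU pathin_subtopology by blast
  have bY: "pathin Y \<beta>" using be pathin_subtopology by blast
  have L: "homotopic_paths_in Y P (\<lambda>_. y)"
    by (rule loops[OF PU]) (simp_all add: P_def jp_def rv_def e)
  have S1: "homotopic_paths_in Y \<alpha> (jp \<beta> P)"
  proof (rule hp_reparam[OF PY, of "\<lambda>t. 1/2 + t/2" "\<lambda>t. max (1/2 - t) (2*t - 1)"])
    show "\<alpha> t = P (1/2 + t/2)" if t: "t \<in> {0..1}" for t
    proof (cases "t = 0")
      case True show ?thesis unfolding True by (simp add: P_def jp_def rv_def e)
    next
      case False
      then have a: "\<not> 1/2 + t/2 \<le> 1/2" "2 * (1/2 + t/2) - 1 = t" using t by auto
      show ?thesis using False t unfolding P_def jp_def a by simp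
    qed
    show "jp \<beta> P t = P (max (1/2 - t) (2*t - 1))" if t: "t \<in> {0..1}" for t
    proof (cases "t \<le> 1/2")
      case True
      then have m: "max (1/2 - t) (2*t - 1) = 1/2 - t" by simp
      have a: "1/2 - t \<le> 1/2" "1 - 2 * (1/2 - t) = 2 * t" using t by auto
      show ?thesis using True t unfolding m jp_def P_def rv_def a by simp
    next
      case False
      then have m: "max (1/2 - t) (2*t - 1) = 2*t - 1" by simp
      show ?thesis using False unfolding m jp_def by simp
    qed
  qed ((intro continuous_intros)?; auto simp: image_subset_iff max_def)+
  have S2: "homotopic_paths_in Y (jp \<beta> P) (jp \<beta> (\<lambda>_. y))"
    by (rule hp_join[OF hp_refl[OF bY] L]) (simp add: P_def jp_def rv_def)
  have S3: "homotopic_paths_in Y (jp \<beta> (\<lambda>_. y)) \<beta>"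
  proof (rule hp_reparam[OF bY, of "\<lambda>t. min 1 (2*t)" "\<lambda>t. t"])
    show "jp \<beta> (\<lambda>_. y) t = \<beta> (min 1 (2*t))" if "t \<in> {0..1}" for t
    proof (cases "t \<le> 1/2")
      case True
      then have m: "min 1 (2*t) = 2*t" by simp
      show ?thesis using True unfolding m jp_def by simp
    next
      case False
      then have m: "min 1 (2*t) = 1" by simp
      show ?thesis using False unfolding m jp_def by (simp add: e)
    qed
  qed ((intro continuous_intros)?; auto simp: image_subset_iff min_def)+
  show ?thesis using hp_trans[OF S1 hp_trans[OF S2 S3]] .
qed


locale coll =
  fixes X :: "'a topology" and n :: nat and A :: "nat \<Rightarrow> 'a set"
  assumes disj: "\<forall>i\<in>{1..n}. \<forall>j\<in>{1..n}. i \<noteq> j \<longrightarrow> A i \<inter> A j = {}"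
    and pc: "\<forall>i\<in>{1..n}. path_connectedin X (A i)"
    and cl: "\<forall>i\<in>{1..n}. closedin X (A i)"
    and lpc: "locally_path_connected_space X"
begin

abbreviation "pp \<equiv> collapse_map X n A"
abbreviation "YY \<equiv> collapse_space X n A"
definition "AA = (\<Union>i\<in>{1..n}. A i)"
definition "VV = pp ` (topspace X - AA)"

lemma A_sub: "i \<in> {1..n} \<Longrightarrow> A i \<subseteq> topspace X"
  using cl closedin_subset by blast

lemma mem_pp: "x \<in> topspace X \<Longrightarrow> y \<in> pp x \<longleftrightarrow> y \<in> topspace X \<and> (x = y \<or> (\<exists>i\<in>{1..n}. x \<in> A i \<and> y \<in> A i))"
  by (simp add: collapse_map_def collapse_rel_def)

lemma self_pp: "x \<in> topspace X \<Longrightarrow> x \<in> pp x"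
  by (simp add: mem_pp)

lemma pp_A: assumes "i \<in> {1..n}" "x \<in> A i" shows "pp x = A i"
proof -
  have x: "x \<in> topspace X" using A_sub assms by blast
  show ?thesis
  proof
    show "pp x \<subseteq> A i"
    proof
      fix y assume "y \<in> pp x"
      then have "x = y \<or> (\<exists>j\<in>{1..n}. x \<in> A j \<and> y \<in> A j)" using mem_pp x by auto
      then show "y \<in> A i"
      proof
        assume "x = y" then show ?thesis using assms by simp
      next
        assume "\<exists>j\<in>{1..n}. x \<in> A j \<and> y \<in> A j"
        then obtain j where j: "j \<in> {1..n}" "x \<in> A j" "y \<in> A j" by blast
        have "j = i"
        proof (rule ccontr)
          assume "j \<noteq> i"
          then have "A i \<inter> A j = {}" using disj assms(1) j(1) by blast
          then show False using assms(2) j(2) by blast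
        qed
        then show ?thesis using j by simp
      qed
    qed
    show "A i \<subseteq> pp x" using mem_pp x assms A_sub by blast
  qed
qed

lemma pp_notA: assumes "x \<in> topspace X" "x \<notin> AA" shows "pp x = {x}"
  using assms(2) by (intro set_eqI) (auto simp: mem_pp[OF assms(1)] AA_def assms(1))

lemma closed_AA: "closedin X AA"
  unfolding AA_def using cl by (intro closedin_Union) auto

lemma topspace_YY: "topspace YY = pp ` topspace X"
proof -
  have e: "{x \<in> topspace X. pp x \<in> pp ` topspace X} = topspace X" by auto
  have o: "openin YY (pp ` topspace X)"
    by (simp only: openin_collapse_space e) simp
  have "\<And>U. openin YY U \<Longrightarrow> U \<subseteq> pp ` topspace X"
    by (simp add: openin_collapse_space)
  then show ?thesis using o openin_subset
    by (metis openin_topspace subset_antisym)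
qed

lemma cont_pp: "continuous_map X YY pp"
  unfolding continuous_map topspace_YY by (auto simp: openin_collapse_space)

lemma sat_preimage:
  assumes S: "S \<subseteq> topspace X" and sat: "\<forall>i\<in>{1..n}. A i \<inter> S \<noteq> {} \<longrightarrow> A i \<subseteq> S"
  shows "{x \<in> topspace X. pp x \<in> pp ` S} = S"
proof
  show "S \<subseteq> {x \<in> topspace X. pp x \<in> pp ` S}" using S by auto
  show "{x \<in> topspace X. pp x \<in> pp ` S} \<subseteq> S"
  proof clarify
    fix x s assume x: "x \<in> topspace X" and s: "s \<in> S" and e: "pp x = pp s"
    have "x \<in> pp s" using e self_pp x by metis
    then have "s = x \<or> (\<exists>i\<in>{1..n}. s \<in> A i \<and> x \<in> A i)" using mem_pp S s by auto
    then show "x \<in> S" using s sat by blast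
  qed
qed

lemma open_sat:
  assumes S: "openin X S" and sat: "\<forall>i\<in>{1..n}. A i \<inter> S \<noteq> {} \<longrightarrow> A i \<subseteq> S"
  shows "openin YY (pp ` S)"
  using sat_preimage[OF openin_subset[OF S] sat] S openin_subset[OF S]
  by (auto simp: openin_collapse_space)

lemma open_VV: "openin YY VV"
  unfolding VV_def
proof (rule open_sat)
  show "openin X (topspace X - AA)" using openin_diff[OF openin_topspace closed_AA] .
  show "\<forall>i\<in>{1..n}. A i \<inter> (topspace X - AA) \<noteq> {} \<longrightarrow> A i \<subseteq> topspace X - AA"
    unfolding AA_def by auto
qed

lemma A_notin_VV: assumes "i \<in> {1..n}" "A i \<noteq> {}" shows "A i \<notin> VV"
proof
  assume "A i \<in> VV"
  then obtain x where x: "x \<in> topspace X" "x \<notin> AA" "A i = pp x" unfolding VV_def by auto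
  then have "x \<in> A i" using self_pp by auto
  then show False using x assms unfolding AA_def by auto
qed

lemma pp_A_in_VV: assumes "x \<in> topspace X" "pp x \<in> VV" shows "x \<notin> AA"
  using assms A_notin_VV pp_A unfolding AA_def by fastforce

definition "qq y = (SOME z. z \<in> y)"

lemma qq_VV: assumes "y \<in> VV" shows "qq y \<in> topspace X - AA" "pp (qq y) = y"
proof -
  obtain x where x: "x \<in> topspace X" "x \<notin> AA" "y = pp x" using assms unfolding VV_def by auto
  then have "y = {x}" using pp_notA by auto
  then have "qq y = x" unfolding qq_def by simp
  then show "qq y \<in> topspace X - AA" "pp (qq y) = y" using x by auto
qed

lemma qq_pp: assumes "x \<in> topspace X" "x \<notin> AA" shows "qq (pp x) = x"
  using pp_notA[OF assms] unfolding qq_def by simp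

lemma cont_qq: "continuous_map (subtopology YY VV) X qq"
  unfolding continuous_map
proof (intro conjI allI impI)
  have VY: "VV \<subseteq> topspace YY" using open_VV openin_subset by blast
  show "qq ` topspace (subtopology YY VV) \<subseteq> topspace X"
    using qq_VV VY by (auto simp: topspace_subtopology)
  fix G assume G: "openin X G"
  have e: "{y \<in> topspace (subtopology YY VV). qq y \<in> G} = pp ` (G - AA)"
  proof
    show "{y \<in> topspace (subtopology YY VV). qq y \<in> G} \<subseteq> pp ` (G - AA)"
    proof clarify
      fix y assume "y \<in> topspace (subtopology YY VV)" "qq y \<in> G"
      then have "y \<in> VV" "qq y \<in> G" by auto
      then show "y \<in> pp ` (G - AA)" using qq_VV by (metis DiffD2 DiffI image_eqI)
    qed
    show "pp ` (G - AA) \<subseteq> {y \<in> topspace (subtopology YY VV). qq y \<in> G}"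
    proof clarify
      fix x assume x: "x \<in> G" "x \<notin> AA"
      have xt: "x \<in> topspace X" using G x openin_subset by blast
      have "pp x \<in> VV" unfolding VV_def using xt x by auto
      then show "pp x \<in> topspace (subtopology YY VV) \<and> qq (pp x) \<in> G"
        using VY qq_pp[OF xt x(2)] x by auto
    qed
  qed
  have "openin YY (pp ` (G - AA))"
  proof (rule open_sat)
    show "openin X (G - AA)" using openin_diff[OF G closed_AA] .
    show "\<forall>i\<in>{1..n}. A i \<inter> (G - AA) \<noteq> {} \<longrightarrow> A i \<subseteq> G - AA"
      unfolding AA_def by auto
  qed
  moreover have "pp ` (G - AA) \<subseteq> VV" unfolding VV_def using G openin_subset by blast
  ultimately show "openin (subtopology YY VV) {y \<in> topspace (subtopology YY VV). qq y \<in> G}"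
    unfolding e openin_subtopology by (intro exI[of _ "pp ` (G - AA)"]) auto
qed

end

lemma pathin_affine:
  assumes g: "pathin Y g" and ab: "0 \<le> a" "a \<le> b" "b \<le> 1"
  shows "pathin Y (\<lambda>u. g (a + (b - a) * u))"
proof -
  have c: "continuous_map (top_of_set {0..1}) (top_of_set {0..1}) (\<lambda>u::real. a + (b - a) * u)"
  proof (rule cm_sub)
    show "continuous_on {0..1::real} (\<lambda>u. a + (b - a) * u)" by (intro continuous_intros)
    show "(\<lambda>u::real. a + (b - a) * u) ` {0..1} \<subseteq> {0..1}"
    proof (clarsimp)
      fix u :: real assume u: "0 \<le> u" "u \<le> 1"
      have "(b - a) * u \<le> b - a" using u ab by (simp add: mult_left_le)
      moreover have "0 \<le> (b - a) * u" using u ab by simp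
      ultimately show "0 \<le> a + (b - a) * u \<and> a + (b - a) * u \<le> 1" using ab by linarith
    qed
  qed
  show ?thesis using continuous_map_compose[OF c g[unfolded pathin_def]] unfolding pathin_def o_def .
qed

context coll begin

lemma U_exists:
  assumes slsc: "semi_locally_simply_connected YY" and i: "i \<in> {1..n}" and ne: "A i \<noteq> {}"
  shows "\<exists>U. openin YY U \<and> A i \<in> U \<and> path_connectedin X {x\<in>topspace X. pp x \<in> U} \<and> U - {A i} \<subseteq> VV \<and>
     (\<forall>l. pathin (subtopology YY U) l \<and> l 0 = A i \<and> l 1 = A i \<longrightarrow> homotopic_paths_in YY l (\<lambda>_. A i))"
proof -
  obtain a where a: "a \<in> A i" using ne by blast
  have at: "a \<in> topspace X" using A_sub i a by blast
  have paa: "pp a = A i" using pp_A i a .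
  have AY: "A i \<in> topspace YY" using topspace_YY at paa by (metis image_eqI)
  have "\<exists>U. openin YY U \<and> A i \<in> U \<and> (\<forall>g. pathin (subtopology YY U) g \<and> g 0 = A i \<and> g 1 = A i \<longrightarrow>
             homotopic_paths_in YY g (\<lambda>_. A i))"
    using slsc AY unfolding semi_locally_simply_connected_def by (rule bspec)
  then obtain U0 where U0: "openin YY U0" "A i \<in> U0" and L0: "\<forall>g. pathin (subtopology YY U0) g \<and> g 0 = A i \<and> g 1 = A i \<longrightarrow> homotopic_paths_in YY g (\<lambda>_. A i)"
    by blast
  define B where "B = (\<Union>j\<in>{1..n}-{i}. A j)"
  have clB: "closedin X B" unfolding B_def using cl by (intro closedin_Union) auto
  define G where "G = {x \<in> topspace X. pp x \<in> U0} - B"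
  have oG: "openin X G" unfolding G_def
    using openin_diff[OF openin_continuous_map_preimage[OF cont_pp U0(1)] clB] .
  have AiB: "A i \<inter> B = {}"
  proof -
    have "A i \<inter> A j = {}" if "j \<in> {1..n}-{i}" for j using disj i that by auto
    then show ?thesis unfolding B_def by blast
  qed
  have AG: "A i \<subseteq> G"
  proof
    fix x assume x: "x \<in> A i"
    have "x \<in> topspace X" using A_sub i x by blast
    moreover have "pp x \<in> U0" using pp_A[OF i x] U0(2) by simp
    moreover have "x \<notin> B" using AiB x by blast
    ultimately show "x \<in> G" unfolding G_def by simp
  qed
  define W where "W = path_component_of_set (subtopology X G) a"
  have lpcG: "locally_path_connected_space (subtopology X G)"
    by (rule locally_path_connected_space_open_subset[OF lpc oG])
  have oW: "openin X W" unfolding W_def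
    using openin_trans_full[OF openin_path_component_of_locally_path_connected_space[OF lpcG] oG] .
  have pcAi: "path_connectedin (subtopology X G) (A i)"
    using path_connectedin_subtopology pc i AG by blast
  have AW: "A i \<subseteq> W" unfolding W_def by (rule path_component_of_maximal[OF pcAi a])
  have WG: "W \<subseteq> G" unfolding W_def using path_component_of_subset_topspace[of "subtopology X G" a]
    by auto
  have pcW: "path_connectedin X W"
    using path_connectedin_path_component_of[of "subtopology X G" a] path_connectedin_subtopology
    unfolding W_def by blast
  have satW: "\<forall>j\<in>{1..n}. A j \<inter> W \<noteq> {} \<longrightarrow> A j \<subseteq> W"
  proof (intro ballI impI)
    fix j assume j: "j \<in> {1..n}" and ne: "A j \<inter> W \<noteq> {}"
    show "A j \<subseteq> W"
    proof (cases "j = i")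
      case True then show ?thesis using AW by simp
    next
      case False
      then have "A j \<subseteq> B" unfolding B_def using j by auto
      then have "A j \<inter> W = {}" using WG unfolding G_def by auto
      then show ?thesis using ne by simp
    qed
  qed
  define U where "U = pp ` W"
  have oU: "openin YY U" unfolding U_def by (rule open_sat[OF oW satW])
  have pre: "{x\<in>topspace X. pp x \<in> U} = W" unfolding U_def
    by (rule sat_preimage[OF openin_subset[OF oW] satW])
  have AU: "A i \<in> U" unfolding U_def using paa a AW by (metis image_eqI subsetD)
  have UU0: "U \<subseteq> U0" unfolding U_def using WG unfolding G_def by auto
  have UV: "U - {A i} \<subseteq> VV"
  proof
    fix y assume y: "y \<in> U - {A i}"
    then obtain x where x: "x \<in> W" "y = pp x" unfolding U_def by auto
    have xt: "x \<in> topspace X" using x oW openin_subset by blast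
    have "x \<notin> AA"
    proof
      assume "x \<in> AA"
      then obtain j where j: "j \<in> {1..n}" "x \<in> A j" unfolding AA_def by auto
      show False
      proof (cases "j = i")
        case True then show False using y x pp_A[OF j] by simp
      next
        case False
        then have "x \<in> B" unfolding B_def using j by auto
        then show False using x WG unfolding G_def by auto
      qed
    qed
    then show "y \<in> VV" unfolding VV_def using x xt by auto
  qed
  have loops: "\<forall>l. pathin (subtopology YY U) l \<and> l 0 = A i \<and> l 1 = A i \<longrightarrow> homotopic_paths_in YY l (\<lambda>_. A i)"
  proof (intro allI impI)
    fix l assume l: "pathin (subtopology YY U) l \<and> l 0 = A i \<and> l 1 = A i"
    then have "pathin (subtopology YY U0) l" using UU0 pathin_subtopology by (metis subsetD)
    then show "homotopic_paths_in YY l (\<lambda>_. A i)" using L0 l by blast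
  qed
  show ?thesis
    using oU AU pcW pre UV loops by (intro exI[of _ U]) simp
qed

lemma piece_V:
  assumes g: "pathin YY \<gamma>" "\<forall>t\<in>{0..1}. \<gamma> t \<in> VV" and x: "x \<in> topspace X" "pp x = \<gamma> 0"
  shows "\<exists>h. pathin X h \<and> h 0 = x \<and> pp (h 1) = \<gamma> 1 \<and> homotopic_paths_in YY (pp \<circ> h) \<gamma>"
proof -
  have gs: "pathin (subtopology YY VV) \<gamma>" using g pathin_subtopology by blast
  define h where "h = qq \<circ> \<gamma>"
  have ph: "pathin X h" unfolding h_def by (rule pathin_compose[OF gs cont_qq])
  have "\<gamma> 0 \<in> VV" using g(2) by simp
  then have xA: "x \<notin> AA" using pp_A_in_VV x by simp
  have h0: "h 0 = x" unfolding h_def using qq_pp[OF x(1) xA] x(2) by simp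
  have h1: "pp (h 1) = \<gamma> 1" unfolding h_def using qq_VV g(2) by simp
  have hom: "homotopic_paths_in YY (pp \<circ> h) \<gamma>"
  proof (rule hp_reparam[OF g(1), of "\<lambda>t. t" "\<lambda>t. t"])
    show "(pp \<circ> h) t = \<gamma> t" if "t \<in> {0..1}" for t
      unfolding h_def using qq_VV g(2) that by simp
  qed auto
  show ?thesis using ph h0 h1 hom by blast
qed

end

lemma K_range:
  assumes s: "0 \<le> s" "s \<le> 1" and t: "0 \<le> t" "t \<le> (1::real)"
  shows "0 \<le> s * min (2*t) 1 + (1 - s) * max (2*t - 1) 0 \<and> s * min (2*t) 1 + (1 - s) * max (2*t - 1) 0 \<le> 1"
proof -
  have m: "0 \<le> min (2*t) 1" "min (2*t) 1 \<le> 1" "0 \<le> max (2*t - 1) 0" "max (2*t - 1) 0 \<le> 1" using t by auto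
  have "s * min (2*t) 1 \<le> s" using m s by (simp add: mult_left_le)
  moreover have "(1 - s) * max (2*t - 1) 0 \<le> 1 - s" using m s by (simp add: mult_left_le)
  moreover have "0 \<le> s * min (2*t) 1" "0 \<le> (1 - s) * max (2*t - 1) 0" using m s by simp_all
  ultimately show ?thesis by linarith
qed

context coll begin

lemma pathin_topspace: "pathin Z g \<Longrightarrow> t \<in> {0..1} \<Longrightarrow> g t \<in> topspace Z"
  unfolding pathin_def continuous_map_def by auto

lemma piece_U:
  assumes i: "i \<in> {1..n}" and pcU: "path_connectedin X {x\<in>topspace X. pp x \<in> U}" and UV: "U - {A i} \<subseteq> VV"
   and loops: "\<forall>l. pathin (subtopology YY U) l \<and> l 0 = A i \<and> l 1 = A i \<longrightarrow> homotopic_paths_in YY l (\<lambda>_. A i)"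
   and g: "pathin YY \<gamma>" "\<forall>t\<in>{0..1}. \<gamma> t \<in> U" and x: "x \<in> topspace X" "pp x = \<gamma> 0"
  shows "\<exists>h. pathin X h \<and> h 0 = x \<and> pp (h 1) = \<gamma> 1 \<and> homotopic_paths_in YY (pp \<circ> h) \<gamma>"
proof (cases "\<exists>s\<in>{0..1}. \<gamma> s = A i")
  case False
  then have "\<forall>t\<in>{0..1}. \<gamma> t \<in> VV" using g(2) UV by blast
  then show ?thesis using piece_V g(1) x by blast
next
  case True
  then obtain s where s: "s \<in> {0..1}" "\<gamma> s = A i" by blast
  define Pre where "Pre = {x\<in>topspace X. pp x \<in> U}"
  have loops': "\<And>l. pathin (subtopology YY U) l \<Longrightarrow> l 0 = A i \<Longrightarrow> l 1 = A i \<Longrightarrow> homotopic_paths_in YY l (\<lambda>_. A i)"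
    using loops by blast
  have "A i \<in> topspace YY" using pathin_topspace[OF g(1) s(1)] s(2) by simp
  then obtain a0 where a0: "a0 \<in> topspace X" "pp a0 = A i" unfolding topspace_YY by auto
  have "\<gamma> 1 \<in> topspace YY" using pathin_topspace[OF g(1)] by simp
  then obtain z where z: "z \<in> topspace X" "pp z = \<gamma> 1" unfolding topspace_YY by auto
  have "\<gamma> s \<in> U" using g(2) s(1) by blast
  then have a0P: "a0 \<in> Pre" unfolding Pre_def using a0 s by auto
  have xP: "x \<in> Pre" unfolding Pre_def using x g(2) by auto
  have zP: "z \<in> Pre" unfolding Pre_def using z g(2) by auto
  have PC: "\<forall>u\<in>Pre. \<forall>v\<in>Pre. \<exists>g. pathin X g \<and> g \<in> {0..1} \<rightarrow> Pre \<and> g 0 = u \<and> g 1 = v"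
    using pcU unfolding path_connectedin Pre_def by blast
  obtain h1 where h1: "pathin X h1" "h1 \<in> {0..1} \<rightarrow> Pre" "h1 0 = x" "h1 1 = a0"
    using PC xP a0P by blast
  obtain h2 where h2: "pathin X h2" "h2 \<in> {0..1} \<rightarrow> Pre" "h2 0 = a0" "h2 1 = z"
    using PC a0P zP by blast
  define \<gamma>1 where "\<gamma>1 = (\<lambda>u. \<gamma> (0 + (s - 0) * u))"
  define \<gamma>2 where "\<gamma>2 = (\<lambda>u. \<gamma> (s + (1 - s) * u))"
  have p1: "pathin YY \<gamma>1" unfolding \<gamma>1_def by (rule pathin_affine[OF g(1)]) (use s in auto)
  have p2: "pathin YY \<gamma>2" unfolding \<gamma>2_def by (rule pathin_affine[OF g(1)]) (use s in auto)
  have r1: "\<gamma>1 u \<in> U" if u: "u \<in> {0..1}" for u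
  proof -
    have "s * u \<le> s" "0 \<le> s * u" using u s by (auto simp: mult_left_le)
    then show ?thesis unfolding \<gamma>1_def using g(2) s by auto
  qed
  have r2: "\<gamma>2 u \<in> U" if u: "u \<in> {0..1}" for u
  proof -
    have "(1 - s) * u \<le> 1 - s" "0 \<le> (1 - s) * u" using u s by (auto simp: mult_left_le)
    then show ?thesis unfolding \<gamma>2_def using g(2) s by auto
  qed
  have p1U: "pathin (subtopology YY U) \<gamma>1" using p1 r1 pathin_subtopology by blast
  have p2U: "pathin (subtopology YY U) \<gamma>2" using p2 r2 pathin_subtopology by blast
  have q1: "pathin YY (pp \<circ> h1)" by (rule pathin_compose[OF h1(1) cont_pp])
  have q2: "pathin YY (pp \<circ> h2)" by (rule pathin_compose[OF h2(1) cont_pp])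
  have q1U: "pathin (subtopology YY U) (pp \<circ> h1)"
    using q1 h1(2) pathin_subtopology unfolding Pre_def by fastforce
  have q2U: "pathin (subtopology YY U) (pp \<circ> h2)"
    using q2 h2(2) pathin_subtopology unfolding Pre_def by fastforce
  have H1: "homotopic_paths_in YY \<gamma>1 (pp \<circ> h1)"
    by (rule slsc_end[OF loops' p1U q1U]) (simp_all add: \<gamma>1_def s h1 a0 x)
  have H2: "homotopic_paths_in YY \<gamma>2 (pp \<circ> h2)"
    by (rule slsc_start[OF loops' p2U q2U]) (simp_all add: \<gamma>2_def s h2 a0 z)
  define h where "h = jp h1 h2"
  have ph: "pathin X h" unfolding h_def by (rule pathin_jp[OF h1(1) h2(1)]) (simp add: h1 h2)
  have h0: "h 0 = x" unfolding h_def jp_def using h1 by simp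
  have h1': "pp (h 1) = \<gamma> 1" unfolding h_def jp_def using h2 z by simp
  have ph_eq: "pp \<circ> h = jp (pp \<circ> h1) (pp \<circ> h2)" unfolding h_def jp_def by (simp add: fun_eq_iff)
  have J: "homotopic_paths_in YY (jp (pp \<circ> h1) (pp \<circ> h2)) (jp \<gamma>1 \<gamma>2)"
    by (rule hp_join[OF hp_sym[OF H1] hp_sym[OF H2]]) (simp add: h1 h2)
  have R: "homotopic_paths_in YY (jp \<gamma>1 \<gamma>2) \<gamma>"
  proof (rule hp_reparam[OF g(1), of "\<lambda>t. s * min (2*t) 1 + (1 - s) * max (2*t - 1) 0" "\<lambda>t. t"])
    show "jp \<gamma>1 \<gamma>2 t = \<gamma> (s * min (2*t) 1 + (1 - s) * max (2*t - 1) 0)" if "t \<in> {0..1}" for t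
    proof (cases "t \<le> 1/2")
      case True
      then have m: "min (2*t) 1 = 2*t" "max (2*t - 1) 0 = 0" by auto
      show ?thesis using True unfolding m jp_def \<gamma>1_def by (simp add: algebra_simps)
    next
      case False
      then have m: "min (2*t) 1 = 1" "max (2*t - 1) 0 = 2*t - 1" by auto
      show ?thesis using False unfolding m jp_def \<gamma>2_def by (simp add: algebra_simps)
    qed
    show "continuous_on {0..1} (\<lambda>t::real. s * min (2*t) 1 + (1 - s) * max (2*t - 1) 0)"
      by (intro continuous_intros)
    show "(\<lambda>t::real. s * min (2*t) 1 + (1 - s) * max (2*t - 1) 0) ` {0..1} \<subseteq> {0..1}"
      using K_range s by auto
  qed auto
  show ?thesis using ph h0 h1' hp_trans[OF J R] unfolding ph_eq[symmetric] by blast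
qed

end

lemma K_range2:
  assumes s: "0 \<le> \<alpha>" "\<alpha> \<le> \<beta>" "\<beta> \<le> 1" and t: "0 \<le> t" "t \<le> (1::real)"
  shows "0 \<le> \<alpha> * min (2*t) 1 + (\<beta> - \<alpha>) * max (2*t - 1) 0 \<and> \<alpha> * min (2*t) 1 + (\<beta> - \<alpha>) * max (2*t - 1) 0 \<le> 1"
proof -
  have m: "0 \<le> min (2*t) 1" "min (2*t) 1 \<le> 1" "0 \<le> max (2*t - 1) 0" "max (2*t - 1) 0 \<le> 1" using t by auto
  have "\<alpha> * min (2*t) 1 \<le> \<alpha>" using m s by (simp add: mult_left_le)
  moreover have "(\<beta> - \<alpha>) * max (2*t - 1) 0 \<le> \<beta> - \<alpha>" using m s by (simp add: mult_left_le)
  moreover have "0 \<le> \<alpha> * min (2*t) 1" "0 \<le> (\<beta> - \<alpha>) * max (2*t - 1) 0" using m s by simp_all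
  ultimately show ?thesis using s by linarith
qed

context coll begin

lemma main:
  assumes slsc: "semi_locally_simply_connected YY" and k: "k \<in> {1..n}" and a: "a \<in> A k"
    and g: "pathin YY g" "g 0 = pp a" "g 1 = pp a"
  shows "\<exists>f. pathin X f \<and> f 0 = a \<and> f 1 = a \<and> homotopic_paths_in YY (pp \<circ> f) g"
proof -
  define Lift where "Lift W \<longleftrightarrow> (\<forall>\<gamma> x. pathin YY \<gamma> \<longrightarrow> (\<forall>t\<in>{0..1}. \<gamma> t \<in> W) \<longrightarrow> x \<in> topspace X \<longrightarrow> pp x = \<gamma> 0 \<longrightarrow>
      (\<exists>h. pathin X h \<and> h 0 = x \<and> pp (h 1) = \<gamma> 1 \<and> homotopic_paths_in YY (pp \<circ> h) \<gamma>))" for W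
  have at: "a \<in> topspace X" using A_sub k a by blast
  have paa: "pp a = A k" using pp_A k a .
  have cover: "\<exists>W. openin YY W \<and> y \<in> W \<and> Lift W" if y: "y \<in> topspace YY" for y
  proof -
    obtain x where x: "x \<in> topspace X" "y = pp x" using y by (auto simp: topspace_YY)
    show ?thesis
    proof (cases "x \<in> AA")
      case False
      have "y \<in> VV" unfolding VV_def using x False by auto
      moreover have "Lift VV" unfolding Lift_def using piece_V by blast
      ultimately show ?thesis using open_VV by blast
    next
      case True
      then obtain i where i: "i \<in> {1..n}" "x \<in> A i" unfolding AA_def by auto
      have yA: "y = A i" using pp_A[OF i] x by simp
      have ne: "A i \<noteq> {}" using i by auto
      obtain U where U: "openin YY U" "A i \<in> U" "path_connectedin X {x\<in>topspace X. pp x \<in> U}" "U - {A i} \<subseteq> VV"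
        "\<forall>l. pathin (subtopology YY U) l \<and> l 0 = A i \<and> l 1 = A i \<longrightarrow> homotopic_paths_in YY l (\<lambda>_. A i)"
        using U_exists[OF slsc i(1) ne] by blast
      have "Lift U" unfolding Lift_def
        using piece_U[OF i(1) U(3) U(4) U(5)] by blast
      then show ?thesis using U(1,2) yA by blast
    qed
  qed
  define C where "C = {T. open T \<and> (\<exists>W. openin YY W \<and> Lift W \<and> (\<forall>t\<in>T \<inter> {0..1}. g t \<in> W))}"
  have IC: "{0..1} \<subseteq> \<Union>C"
  proof
    fix t :: real assume t: "t \<in> {0..1}"
    obtain W where W: "openin YY W" "g t \<in> W" "Lift W" using cover pathin_topspace[OF g(1) t] by blast
    have "openin (top_of_set {0..1}) {u \<in> topspace (top_of_set {0..1}). g u \<in> W}"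
      by (rule openin_continuous_map_preimage[OF g(1)[unfolded pathin_def] W(1)])
    then obtain T where T: "open T" "{u \<in> {0..1}. g u \<in> W} = {0..1} \<inter> T"
      unfolding openin_open by auto
    have "T \<in> C" unfolding C_def using T W by blast
    moreover have "t \<in> T" using T(2) t W(2) by blast
    ultimately show "t \<in> \<Union>C" by blast
  qed
  have Cne: "C \<noteq> {}" using IC by auto
  obtain \<delta> where d: "0 < \<delta>" and leb: "\<And>T. T \<subseteq> {0..1} \<Longrightarrow> diameter T < \<delta> \<Longrightarrow> \<exists>B\<in>C. T \<subseteq> B"
    using Lebesgue_number_lemma[OF compact_Icc Cne IC] unfolding C_def by blast
  obtain N :: nat where N: "1/\<delta> < real N" using reals_Archimedean2 by blast
  have Npos: "0 < N" using N d
    by (metis divide_pos_pos gr0I of_nat_0 order_less_asym zero_less_one)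
  have Nd: "1 / real N < \<delta>" using N d Npos by (simp add: field_simps)
  have pieces: "\<exists>W. Lift W \<and> (\<forall>t\<in>{real j / real N .. real (Suc j) / real N}. g t \<in> W)" if j: "j < N" for j
  proof -
    have sub: "{real j / real N .. real (Suc j) / real N} \<subseteq> {0..1}"
      using j Npos by (auto simp: divide_simps)
    have "diameter {real j / real N .. real (Suc j) / real N} = 1 / real N"
      using Npos by (simp add: divide_simps)
    then obtain B where B: "B \<in> C" "{real j / real N .. real (Suc j) / real N} \<subseteq> B"
      using leb[OF sub] Nd by auto
    then obtain W where W: "Lift W" "\<forall>t\<in>B \<inter> {0..1}. g t \<in> W" unfolding C_def by blast
    show ?thesis using W B sub by blast
  qed
  have ind: "\<exists>f. pathin X f \<and> f 0 = a \<and> pp (f 1) = g (real j / real N) \<and>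
              homotopic_paths_in YY (pp \<circ> f) (\<lambda>u. g (real j / real N * u))" if "j \<le> N" for j
    using that
  proof (induction j)
    case 0
    have "pp a \<in> topspace YY" using at by (simp add: topspace_YY)
    then have "homotopic_paths_in YY (\<lambda>_. pp a) (\<lambda>_. pp a)" by (simp add: hp_refl)
    moreover have "(\<lambda>u. g (real 0 / real N * u)) = (\<lambda>_. pp a)" using g(2) by simp
    moreover have "pp \<circ> (\<lambda>_. a) = (\<lambda>_. pp a)" by (simp add: o_def)
    ultimately show ?case using at g(2) by (intro exI[of _ "\<lambda>_. a"]) simp
  next
    case (Suc j)
    then have jN: "j < N" by simp
    obtain f where f: "pathin X f" "f 0 = a" "pp (f 1) = g (real j / real N)"
      "homotopic_paths_in YY (pp \<circ> f) (\<lambda>u. g (real j / real N * u))"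
      using Suc.IH[OF Suc_leD[OF Suc.prems]] by blast
    obtain W where W: "Lift W" "\<forall>t\<in>{real j / real N .. real (Suc j) / real N}. g t \<in> W"
      using pieces[OF jN] by blast
    define \<alpha> where "\<alpha> = real j / real N"
    define \<beta> where "\<beta> = real (Suc j) / real N"
    have ab: "0 \<le> \<alpha>" "\<alpha> \<le> \<beta>" "\<beta> \<le> 1" unfolding \<alpha>_def \<beta>_def using jN Npos by (auto simp: divide_simps)
    define \<gamma> where "\<gamma> = (\<lambda>u. g (\<alpha> + (\<beta> - \<alpha>) * u))"
    have pg: "pathin YY \<gamma>" unfolding \<gamma>_def by (rule pathin_affine[OF g(1) ab])
    have gW: "\<forall>t\<in>{0..1}. \<gamma> t \<in> W"
    proof
      fix u :: real assume u: "u \<in> {0..1}"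
      have "(\<beta> - \<alpha>) * u \<le> \<beta> - \<alpha>" "0 \<le> (\<beta> - \<alpha>) * u" using u ab by (auto simp: mult_left_le)
      then have "\<alpha> + (\<beta> - \<alpha>) * u \<in> {real j / real N .. real (Suc j) / real N}"
        unfolding \<alpha>_def \<beta>_def by auto
      then show "\<gamma> u \<in> W" unfolding \<gamma>_def using W(2) by blast
    qed
    have f1t: "f 1 \<in> topspace X" using pathin_topspace[OF f(1)] by simp
    have "pp (f 1) = \<gamma> 0" unfolding \<gamma>_def using f(3) \<alpha>_def by simp
    then obtain h where h: "pathin X h" "h 0 = f 1" "pp (h 1) = \<gamma> 1" "homotopic_paths_in YY (pp \<circ> h) \<gamma>"
      using W(1) pg gW f1t unfolding Lift_def by blast
    have pf': "pathin X (jp f h)" by (rule pathin_jp[OF f(1) h(1)]) (simp add: h)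
    have f'0: "jp f h 0 = a" using f(2) by (simp add: jp_def)
    have f'1: "pp (jp f h 1) = g \<beta>" using h(3) by (simp add: jp_def \<gamma>_def)
    have eq: "pp \<circ> jp f h = jp (pp \<circ> f) (pp \<circ> h)" by (simp add: jp_def fun_eq_iff)
    have J: "homotopic_paths_in YY (jp (pp \<circ> f) (pp \<circ> h)) (jp (\<lambda>u. g (\<alpha> * u)) \<gamma>)"
      by (rule hp_join[OF f(4)[folded \<alpha>_def] h(4)]) (simp add: h)
    have R: "homotopic_paths_in YY (jp (\<lambda>u. g (\<alpha> * u)) \<gamma>) (\<lambda>u. g (\<beta> * u))"
    proof (rule hp_reparam[OF g(1), of "\<lambda>t. \<alpha> * min (2*t) 1 + (\<beta> - \<alpha>) * max (2*t - 1) 0" "\<lambda>t. \<beta> * t"])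
      show "jp (\<lambda>u. g (\<alpha> * u)) \<gamma> t = g (\<alpha> * min (2*t) 1 + (\<beta> - \<alpha>) * max (2*t - 1) 0)" if "t \<in> {0..1}" for t
      proof (cases "t \<le> 1/2")
        case True
        then have m: "min (2*t) 1 = 2*t" "max (2*t - 1) 0 = 0" by auto
        show ?thesis using True unfolding m jp_def by simp
      next
        case False
        then have m: "min (2*t) 1 = 1" "max (2*t - 1) 0 = 2*t - 1" by auto
        show ?thesis using False unfolding m jp_def \<gamma>_def by simp
      qed
      show "continuous_on {0..1} (\<lambda>t::real. \<alpha> * min (2*t) 1 + (\<beta> - \<alpha>) * max (2*t - 1) 0)"
        by (intro continuous_intros)
      show "(\<lambda>t::real. \<alpha> * min (2*t) 1 + (\<beta> - \<alpha>) * max (2*t - 1) 0) ` {0..1} \<subseteq> {0..1}"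
        using K_range2[OF ab] by auto
      show "continuous_on {0..1} (\<lambda>t::real. \<beta> * t)" by (intro continuous_intros)
      show "(\<lambda>t::real. \<beta> * t) ` {0..1} \<subseteq> {0..1}"
      proof clarsimp
        fix t :: real assume "0 \<le> t" "t \<le> 1"
        then show "0 \<le> \<beta> * t \<and> \<beta> * t \<le> 1" using ab mult_left_le[of t \<beta>] by auto
      qed
    qed auto
    show ?case
      using pf' f'0 f'1 hp_trans[OF J R] unfolding eq[symmetric] \<beta>_def by blast
  qed
  obtain f where f: "pathin X f" "f 0 = a" "pp (f 1) = g (real N / real N)"
      "homotopic_paths_in YY (pp \<circ> f) (\<lambda>u. g (real N / real N * u))"
    using ind[of N] by blast
  have NN: "real N / real N = 1" using Npos by simp
  have fg: "homotopic_paths_in YY (pp \<circ> f) g" using f(4) unfolding NN by simp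
  have pf1: "pp (f 1) = A k" using f(3) g(3) paa unfolding NN by simp
  have "f 1 \<in> topspace X" using pathin_topspace[OF f(1)] by simp
  then have f1A: "f 1 \<in> A k" using self_pp pf1 by metis
  have "\<forall>u\<in>A k. \<forall>v\<in>A k. \<exists>r. pathin X r \<and> r \<in> {0..1} \<rightarrow> A k \<and> r 0 = u \<and> r 1 = v"
    using pc k unfolding path_connectedin by blast
  then obtain r where r: "pathin X r" "r \<in> {0..1} \<rightarrow> A k" "r 0 = f 1" "r 1 = a"
    using f1A a by blast
  have pf'': "pathin X (jp f r)" by (rule pathin_jp[OF f(1) r(1)]) (simp add: r)
  have pfp: "pathin YY (pp \<circ> f)" by (rule pathin_compose[OF f(1) cont_pp])
  have H: "homotopic_paths_in YY (pp \<circ> jp f r) (pp \<circ> f)"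
  proof (rule hp_reparam[OF pfp, of "\<lambda>t. min (2*t) 1" "\<lambda>t. t"])
    show "(pp \<circ> jp f r) t = (pp \<circ> f) (min (2*t) 1)" if t: "t \<in> {0..1}" for t
    proof (cases "t \<le> 1/2")
      case True
      then have m: "min (2*t) 1 = 2*t" by auto
      show ?thesis using True unfolding m jp_def by simp
    next
      case False
      then have m: "min (2*t) 1 = 1" by auto
      have "2*t - 1 \<in> {0..1}" using False t by auto
      then have "r (2*t - 1) \<in> A k" using r(2) by blast
      then have "pp (r (2*t - 1)) = A k" using pp_A[OF k] by blast
      then show ?thesis using False pf1 unfolding m jp_def by simp
    qed
    show "continuous_on {0..1} (\<lambda>t::real. min (2*t) 1)" by (intro continuous_intros)
    show "(\<lambda>t::real. min (2*t) 1) ` {0..1} \<subseteq> {0..1}" by auto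
  qed auto
  show ?thesis
    using pf'' f(2) r(4) hp_trans[OF H fg] by (intro exI[of _ "jp f r"]) (simp add: jp_def)
qed

end

theorem corollary3p13:
  fixes X :: "'a topology" and n :: nat and A :: "nat \<Rightarrow> 'a set"
  assumes "first_countable X"
    and "connected_space X"
    and "locally_path_connected_space X"
    and "\<forall>i\<in>{1..n}. \<forall>j\<in>{1..n}. i \<noteq> j \<longrightarrow> A i \<inter> A j = {}"
    and "\<forall>i\<in>{1..n}. path_connectedin X (A i)"
    and "\<forall>i\<in>{1..n}. closedin X (A i)"
    and "semi_locally_simply_connected (collapse_space X n A)"
  shows "\<forall>a \<in> (\<Union>i\<in>{1..n}. A i). \<forall>g.
           pathin (collapse_space X n A) g \<and>
           g 0 = collapse_map X n A a \<and> g 1 = collapse_map X n A a \<longrightarrow>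
           (\<exists>f. pathin X f \<and> f 0 = a \<and> f 1 = a \<and>
                homotopic_paths_in (collapse_space X n A) (collapse_map X n A \<circ> f) g)"
proof (intro ballI allI impI)
  interpret coll X n A
    using assms(3-6) by unfold_locales auto
  fix a g
  assume a: "a \<in> (\<Union>i\<in>{1..n}. A i)"
    and g: "pathin (collapse_space X n A) g \<and> g 0 = collapse_map X n A a \<and> g 1 = collapse_map X n A a"
  from a obtain k where k: "k \<in> {1..n}" "a \<in> A k" by blast
  show "\<exists>f. pathin X f \<and> f 0 = a \<and> f 1 = a \<and>
                homotopic_paths_in (collapse_space X n A) (collapse_map X n A \<circ> f) g"
    using main[OF assms(7) k] g by blast
qed

end
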